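(* Let $k\ge 1$ and let $G$ be a $k$-degenerate graph. Define a sequence of edge sets as follows. Set $\Lambda_0=\emptyset$. For $i \ge 1$, let $G_i$ be the graph formed by the edges of $E(G)\setminus(\Lambda_0\cup\dots\cup\Lambda_{i-1})$ (with their endpoints), and let $\deg_i(v)$ denote the degree of $v$ in $G_i$. If $G_i$ has at least one edge, choose a vertex $w_i$ of $G_i$ such that at least $\max\{1,\deg_i(w_i)-k\}$ of its neighbors in $G_i$ have $\deg_i \le k$ (such a vertex always exists), and set $\Lambda_i=\{w_iv : w_iv\in E(G_i),\ \deg_i(v)\le k\}$; the vertex $w_i$ is called the center of $\Lambda_i$. The process stops at the first $m$ for which $G_{m+1}$ has no edges. Then for all $1\le i<j\le m$, the centers $w_i$ and $w_j$ are distinct.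
   Context: All graphs are finite and simple. A graph is $k$-degenerate if every subgraph of it has a vertex of degree at most $k$. *)

theory Defs
  imports Main
begin

definition simple_graph :: "'a set \<Rightarrow> 'a set set \<Rightarrow> bool" where
  "simple_graph V E \<longleftrightarrow> finite V \<and> (\<forall>e\<in>E. e \<subseteq> V \<and> card e = 2)"

definition deg_in :: "'a set set \<Rightarrow> 'a \<Rightarrow> nat" where
  "deg_in F v = card {e \<in> F. v \<in> e}"

definition subgraph :: "'a set \<Rightarrow> 'a set set \<Rightarrow> 'a set \<Rightarrow> 'a set set \<Rightarrow> bool" where
  "subgraph V' E' V E \<longleftrightarrow> V' \<subseteq> V \<and> E' \<subseteq> E \<and> (\<forall>e\<in>E'. e \<subseteq> V')"

definition degenerate :: "nat \<Rightarrow> 'a set \<Rightarrow> 'a set set \<Rightarrow> bool" where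
  "degenerate k V E \<longleftrightarrow>
     (\<forall>V' E'. subgraph V' E' V E \<and> V' \<noteq> {} \<longrightarrow> (\<exists>v\<in>V'. deg_in E' v \<le> k))"

definition remaining :: "'a set set \<Rightarrow> (nat \<Rightarrow> 'a set set) \<Rightarrow> nat \<Rightarrow> 'a set set" where
  "remaining E \<Lambda> i = E - (\<Union>j<i. \<Lambda> j)"

definition valid_process ::
  "nat \<Rightarrow> 'a set set \<Rightarrow> (nat \<Rightarrow> 'a) \<Rightarrow> (nat \<Rightarrow> 'a set set) \<Rightarrow> nat \<Rightarrow> bool" where
  "valid_process k E w \<Lambda> m \<longleftrightarrow>
     \<Lambda> 0 = {} \<and>
     (\<forall>i. 1 \<le> i \<and> i \<le> m \<longrightarrow>
        (let R = remaining E \<Lambda> i in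
          R \<noteq> {} \<and>
          w i \<in> \<Union>R \<and>
          card {v. {w i, v} \<in> R \<and> deg_in R v \<le> k} \<ge> max 1 (deg_in R (w i) - k) \<and>
          \<Lambda> i = {{w i, v} | v. {w i, v} \<in> R \<and> deg_in R v \<le> k})) \<and>
     remaining E \<Lambda> (m + 1) = {}"

end

theory Submission
  imports Defs
begin

lemma rem_Suc: "remaining E \<Lambda> (Suc t) = remaining E \<Lambda> t - \<Lambda> t"
  unfolding remaining_def by (auto simp: lessThan_Suc)

lemma rem_mono: "t \<le> s \<Longrightarrow> remaining E \<Lambda> s \<subseteq> remaining E \<Lambda> t"
  unfolding remaining_def by auto

lemma fin_E: "simple_graph V E \<Longrightarrow> finite E"
  unfolding simple_graph_def
  by (meson Pow_iff finite_Pow_iff finite_subset subsetI)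

lemma deg_mono: "finite F \<Longrightarrow> G \<subseteq> F \<Longrightarrow> deg_in G v \<le> deg_in F v"
  unfolding deg_in_def by (rule card_mono) auto

lemma step_info:
  assumes "valid_process k E w \<Lambda> m" "1 \<le> t" "t \<le> m"
  shows "card {v. {w t, v} \<in> remaining E \<Lambda> t \<and> deg_in (remaining E \<Lambda> t) v \<le> k}
           \<ge> max 1 (deg_in (remaining E \<Lambda> t) (w t) - k)"
    and "\<Lambda> t = {{w t, v} | v. {w t, v} \<in> remaining E \<Lambda> t \<and> deg_in (remaining E \<Lambda> t) v \<le> k}"
  using assms unfolding valid_process_def Let_def by auto

lemma card2_ne: "simple_graph V E \<Longrightarrow> {x, v} \<in> remaining E \<Lambda> t \<Longrightarrow> x \<noteq> v"
  unfolding simple_graph_def remaining_def by auto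

lemma deg_keep:
  assumes "valid_process k E w \<Lambda> m" "1 \<le> t" "t \<le> m"
    and "v \<noteq> w t" "deg_in (remaining E \<Lambda> t) v > k"
  shows "deg_in (remaining E \<Lambda> (Suc t)) v = deg_in (remaining E \<Lambda> t) v"
proof -
  have L: "\<Lambda> t = {{w t, u} | u. {w t, u} \<in> remaining E \<Lambda> t \<and> deg_in (remaining E \<Lambda> t) u \<le> k}"
    using step_info(2)[OF assms(1-3)] .
  have "{e \<in> remaining E \<Lambda> (Suc t). v \<in> e} = {e \<in> remaining E \<Lambda> t. v \<in> e}"
  proof -
    have "\<And>e. e \<in> \<Lambda> t \<Longrightarrow> v \<notin> e"
    proof
      fix e assume "e \<in> \<Lambda> t" "v \<in> e"
      then obtain u where u: "e = {w t, u}" "deg_in (remaining E \<Lambda> t) u \<le> k" using L by auto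
      with \<open>v \<in> e\<close> assms(4) have "u = v" by auto
      with u assms(5) show False by simp
    qed
    then show ?thesis unfolding rem_Suc by auto
  qed
  then show ?thesis unfolding deg_in_def by simp
qed

theorem mainTheorem3:
  fixes V :: "'a set" and E :: "'a set set" and k m :: nat
    and w :: "nat \<Rightarrow> 'a" and \<Lambda> :: "nat \<Rightarrow> 'a set set"
  assumes "k \<ge> 1"
    and "simple_graph V E"
    and "degenerate k V E"
    and "valid_process k E w \<Lambda> m"
  shows "\<forall>i j. 1 \<le> i \<and> i < j \<and> j \<le> m \<longrightarrow> w i \<noteq> w j"
proof (intro allI impI notI)
  fix i j assume ij: "1 \<le> i \<and> i < j \<and> j \<le> m" and eq: "w i = w j"
  define R where "R = remaining E \<Lambda>"
  define x where "x = w i"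
  have finR: "\<And>t. finite (R t)" unfolding R_def remaining_def using fin_E[OF assms(2)] by auto
  have vp: "valid_process k E w \<Lambda> m" by fact
  have A: "deg_in (R (Suc i)) x \<le> k"
  proof -
    define S where "S = {v. {x, v} \<in> R i \<and> deg_in (R i) v \<le> k}"
    have cS: "card S \<ge> max 1 (deg_in (R i) x - k)"
      using step_info(1)[OF vp, of i] ij unfolding S_def R_def x_def by auto
    have L0: "\<Lambda> i = {{x, v} | v. {x, v} \<in> R i \<and> deg_in (R i) v \<le> k}"
      using step_info(2)[OF vp, of i] ij unfolding R_def x_def by simp
    have L: "\<Lambda> i = (\<lambda>v. {x, v}) ` S"
      unfolding L0 S_def by blast
    have finS: "finite S" proof (rule ccontr)
      assume "infinite S" then have "card S = 0" by simp
      with cS show False by simp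
    qed
    have inj: "inj_on (\<lambda>v. {x, v}) S"
    proof (rule inj_onI)
      fix a b assume "a \<in> S" "b \<in> S" "{x, a} = {x, b}"
      moreover have "x \<noteq> a" using \<open>a \<in> S\<close> card2_ne[OF assms(2)] unfolding S_def R_def by blast
      ultimately show "a = b" by (metis doubleton_eq_iff)
    qed
    have cL: "card (\<Lambda> i) = card S" using L inj card_image by metis
    have sub: "\<Lambda> i \<subseteq> {e \<in> R i. x \<in> e}" using L unfolding S_def by auto
    have "{e \<in> R (Suc i). x \<in> e} = {e \<in> R i. x \<in> e} - \<Lambda> i" unfolding R_def rem_Suc by auto
    hence "deg_in (R (Suc i)) x = deg_in (R i) x - card (\<Lambda> i)"
      unfolding deg_in_def using sub finR by (simp add: card_Diff_subset finite_subset)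
    with cL cS show ?thesis by linarith
  qed
  have B: "\<forall>v. {x, v} \<in> R (Suc i + n) \<longrightarrow> deg_in (R (Suc i + n)) v > k"
    if "Suc i + n \<le> j" for n
    using that
  proof (induction n)
    case 0
    show ?case
    proof (intro allI impI)
      fix v assume v: "{x, v} \<in> R (Suc i + 0)"
      hence vR: "{x, v} \<in> R i" "{x, v} \<notin> \<Lambda> i" unfolding R_def using rem_Suc[of E \<Lambda> i] by auto
      have xv: "x \<noteq> v" using card2_ne[OF assms(2)] vR unfolding R_def by blast
      have gt: "deg_in (R i) v > k"
        using vR step_info(2)[OF vp, of i] ij unfolding R_def x_def by force
      show "deg_in (R (Suc i + 0)) v > k"
        using deg_keep[OF vp, of i v] ij xv gt unfolding R_def x_def by simp
    qed
  next
    case (Suc n)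
    let ?t = "Suc i + n"
    have IH: "\<forall>v. {x, v} \<in> R ?t \<longrightarrow> deg_in (R ?t) v > k" using Suc by simp
    have t1: "1 \<le> ?t" "?t \<le> m" using Suc.prems ij by auto
    show ?case
    proof (intro allI impI)
      fix v assume v: "{x, v} \<in> R (Suc i + Suc n)"
      hence vR: "{x, v} \<in> R ?t" "{x, v} \<notin> \<Lambda> ?t" unfolding R_def using rem_Suc[of E \<Lambda> ?t] by auto
      have gt: "deg_in (R ?t) v > k" using IH vR by blast
      have degx: "deg_in (R ?t) x \<le> k"
        using A deg_mono[OF finR, of "R ?t" "Suc i" x] rem_mono[of "Suc i" ?t E \<Lambda>]
        unfolding R_def by simp
      have "v \<noteq> w ?t"
      proof
        assume "v = w ?t"
        hence "{w ?t, x} \<in> R ?t" using vR by (simp add: insert_commute)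
        hence "{w ?t, x} \<in> \<Lambda> ?t" using step_info(2)[OF vp t1] degx unfolding R_def by blast
        with vR \<open>v = w ?t\<close> show False by (simp add: insert_commute)
      qed
      then show "deg_in (R (Suc i + Suc n)) v > k"
        using deg_keep[OF vp t1 _ ] gt unfolding R_def by simp
    qed
  qed
  obtain n where n: "j = Suc i + n" using ij by (metis less_iff_Suc_add add_Suc)
  have Bj: "\<forall>v. {x, v} \<in> R j \<longrightarrow> deg_in (R j) v > k" using B[of n] n by simp
  have "card {v. {w j, v} \<in> R j \<and> deg_in (R j) v \<le> k} \<ge> 1"
    using step_info(1)[OF vp, of j] ij unfolding R_def by auto
  moreover have "{v. {w j, v} \<in> R j \<and> deg_in (R j) v \<le> k} = {}"
    using Bj eq x_def by force
  ultimately show False by simp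
qed

end
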